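(* In the hierarchical partition construction described in the context, every set $S^*\in\mathcal S_j$ (for $j\ge1$) has at most $\lambda^{3+\eta}$ children, i.e. at most $\lambda^{3+\eta}$ sets $S\in\mathcal S_{j-1}$ satisfy $S\subseteq S^*$.
   Context: Let $(V,d)$ be a finite metric space with $|V|\ge 2$ which is doubling with constant $\lambda$: for every $v\in V$ and $r>0$ the open ball $B_{2r}(v)=\{u:d(u,v)<2r\}$ is contained in the union of at most $\lambda$ open balls $B_r(w)$, $w\in V$. Fix an integer $\eta\ge2$ and a real $\tau$ with $1+\frac{1}{2^{\eta-1}-1}\le\tau\le 2^{\eta}$. For $L\subseteq V$ and $r>0$, a greedy partition of $L$ with parameter $r$ is obtained by: set $L_0=L$; while $L_i\ne\emptyset$ choose any $v_i\in L_i$, let $P_i=\{u\in L_i: d(u,v_i)<2^{-\eta-1}r\}$ with leader $v_i$, and set $L_{i+1}=L_i\setminus P_i$. Hierarchical partition construction: choose $r_0$ with $0<r_0<\min_{u\ne v}d(u,v)$ and put $r_j=\tau^j r_0$. Let $\mathcal S_0=\{\{v\}:v\in V\}$, the leader of $\{v\}$ being $v$. While $\mathcal S_j$ has more than one element: let $L_j$ be the set of leaders of the sets in $\mathcal S_j$, let $\mathcal S'_{j+1}$ be a greedy partition of $L_j$ with parameter $2r_{j+1}$, and let $\mathcal S_{j+1}$ consist, for each $P\in\mathcal S'_{j+1}$, of the set $\bigcup\{S\in\mathcal S_j:\mathrm{leader}(S)\in P\}$, whose leader is defined to be the leader of $P$. Each $\mathcal S_j$ is a partition of $V$; $S\in\mathcal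 S_{j-1}$ is a child of $S^*\in\mathcal S_{j}$ if $S\subseteq S^*$. *)

theory Defs
  imports Complex_Main
begin

definition finite_metric :: "'a set \<Rightarrow> ('a \<Rightarrow> 'a \<Rightarrow> real) \<Rightarrow> bool" where
  "finite_metric V d \<longleftrightarrow> finite V \<and>
     (\<forall>x\<in>V. \<forall>y\<in>V. (d x y = 0 \<longleftrightarrow> x = y) \<and> d x y = d y x) \<and>
     (\<forall>x\<in>V. \<forall>y\<in>V. \<forall>z\<in>V. d x z \<le> d x y + d y z)"

definition oball :: "'a set \<Rightarrow> ('a \<Rightarrow> 'a \<Rightarrow> real) \<Rightarrow> 'a \<Rightarrow> real \<Rightarrow> 'a set" where
  "oball V d v r = {u \<in> V. d u v < r}"

definition doubling :: "'a set \<Rightarrow> ('a \<Rightarrow> 'a \<Rightarrow> real) \<Rightarrow> nat \<Rightarrow> bool" where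
  "doubling V d lam \<longleftrightarrow> (\<forall>v\<in>V. \<forall>r>0. \<exists>W. W \<subseteq> V \<and> finite W \<and> card W \<le> lam \<and>
      oball V d v (2 * r) \<subseteq> (\<Union>w\<in>W. oball V d w r))"

text \<open>Greedy partition of L with parameter r: a list of (leader, part) pairs in the
order produced by the greedy procedure.\<close>
inductive greedy_part :: "('a \<Rightarrow> 'a \<Rightarrow> real) \<Rightarrow> nat \<Rightarrow> real \<Rightarrow> 'a set \<Rightarrow> ('a \<times> 'a set) list \<Rightarrow> bool"
  for d :: "'a \<Rightarrow> 'a \<Rightarrow> real" and eta :: nat and r :: real where
  empty: "greedy_part d eta r {} []"
| step: "v \<in> L \<Longrightarrow> P = {u \<in> L. d u v < r / 2 ^ (eta + 1)} \<Longrightarrow>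
         greedy_part d eta r (L - P) ps \<Longrightarrow> greedy_part d eta r L ((v, P) # ps)"

text \<open>A run of the hierarchical partition construction: Ss j is the set of pairs
(leader, set) forming the partition S_j, for j = 0..J, where J is the final level
(the first with a single set).\<close>
definition hier_run :: "'a set \<Rightarrow> ('a \<Rightarrow> 'a \<Rightarrow> real) \<Rightarrow> nat \<Rightarrow> real \<Rightarrow> real \<Rightarrow>
    (nat \<Rightarrow> ('a \<times> 'a set) set) \<Rightarrow> nat \<Rightarrow> bool" where
  "hier_run V d eta tau r0 Ss J \<longleftrightarrow>
     Ss 0 = {(v, {v}) | v. v \<in> V} \<and>
     (\<forall>j<J. card (Ss j) > 1 \<and>
        (\<exists>gp. greedy_part d eta (2 * (tau ^ (Suc j) * r0)) (fst ` Ss j) gp \<and>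
           Ss (Suc j) = {(v, \<Union>{S. \<exists>l. (l, S) \<in> Ss j \<and> l \<in> P}) | v P. (v, P) \<in> set gp})) \<and>
     card (Ss J) = 1"

end

theory Submission
  imports Defs
begin

lemma g1:
  assumes "greedy_part d eta r L gp" "(v,P) \<in> set gp" "\<forall>x\<in>L. d x x = 0" "r > 0"
  shows "v \<in> P \<and> P \<subseteq> L \<and> (\<forall>u\<in>P. d u v < r / 2^(eta+1))"
    using assms
proof (induction arbitrary: v P rule: greedy_part.induct)
  case empty thus ?case by simp
next
  case (step w L Q ps)
  have IH: "(v',P')\<in> set ps \<Longrightarrow> v' \<in> P' \<and> P' \<subseteq> L - Q \<and> (\<forall>u\<in>P'. d u v' < r / 2^(eta+1))" for v' P'
    using step.IH[of v' P'] step.prems by auto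
  have R: "r / 2^(eta+1) > 0" using step.prems by simp
  from step.prems(1) consider "(v,P)=(w,Q)" | "(v,P) \<in> set ps" by auto
  then show ?case
  proof cases
    case 1 then show ?thesis using step.hyps(1,2) step.prems(2) R by auto
  next
    case 2 then show ?thesis using IH by blast
  qed
qed

lemma g2:
  assumes "greedy_part d eta r L gp" "(v,P) \<in> set gp" "(v',P') \<in> set gp" "(v,P) \<noteq> (v',P')"
    "\<forall>x\<in>L. d x x = 0" "r > 0"
  shows "P \<inter> P' = {} \<and> (r / 2^(eta+1) \<le> d v v' \<or> r / 2^(eta+1) \<le> d v' v)"
  using assms
proof (induction arbitrary: v P v' P' rule: greedy_part.induct)
  case empty thus ?case by simp
next
  case (step w L Q ps)
  have A: "x \<in> set ps \<Longrightarrow> fst x \<in> snd x \<and> snd x \<subseteq> L - Q" for x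
    using g1[OF step(3), of "fst x" "snd x"] step.prems(4,5) by auto
  consider "(v,P) = (w,Q)" "(v',P') \<in> set ps" | "(v',P') = (w,Q)" "(v,P) \<in> set ps"
    | "(v,P) \<in> set ps" "(v',P') \<in> set ps" using step.prems by auto
  then show ?case
  proof cases
    case 1
    then have "v' \<in> L" "v' \<notin> Q" "P' \<subseteq> L - Q" using A[of "(v',P')"] by auto
    then have "\<not> d v' w < r / 2^(eta+1)" using step(2) by blast
    moreover have "Q \<inter> P' = {}" using \<open>P' \<subseteq> L - Q\<close> by blast
    ultimately show ?thesis using 1 by auto
  next
    case 2
    then have "v \<in> L" "v \<notin> Q" "P \<subseteq> L - Q" using A[of "(v,P)"] by auto
    then have "\<not> d v w < r / 2^(eta+1)" using step(2) by blast
    moreover have "P \<inter> Q = {}" using \<open>P \<subseteq> L - Q\<close> by blast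
    ultimately show ?thesis using 2 by auto
  next
    case 3
    have "\<forall>x\<in>L - Q. d x x = 0" using step.prems(4) by blast
    then show ?thesis using step.IH[of v P v' P'] 3 step.prems(3) step.prems(5) by blast
  qed
qed

lemma doubling_iter:
  assumes "doubling V d lam" "v \<in> V" "r > 0"
  shows "\<exists>W. W \<subseteq> V \<and> finite W \<and> card W \<le> lam^k \<and>
           oball V d v r \<subseteq> (\<Union>w\<in>W. oball V d w (r/2^k))"
proof (induction k)
  case 0 show ?case by (rule exI[of _ "{v}"]) (use assms in auto)
next
  case (Suc k)
  then obtain W where W: "W \<subseteq> V" "finite W" "card W \<le> lam^k"
    "oball V d v r \<subseteq> (\<Union>w\<in>W. oball V d w (r/2^k))" by blast
  have pos: "r/2^Suc k > 0" using assms by simp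
  have "\<forall>w\<in>W. \<exists>U. U \<subseteq> V \<and> finite U \<and> card U \<le> lam \<and>
      oball V d w (2*(r/2^Suc k)) \<subseteq> (\<Union>u\<in>U. oball V d u (r/2^Suc k))"
    using assms(1) W(1) pos unfolding doubling_def by (meson subsetD)
  then obtain U where U: "\<forall>w\<in>W. U w \<subseteq> V \<and> finite (U w) \<and> card (U w) \<le> lam \<and>
      oball V d w (2*(r/2^Suc k)) \<subseteq> (\<Union>u\<in>U w. oball V d u (r/2^Suc k))" by metis
  have e: "2*(r/2^Suc k) = r/2^k" by simp
  show ?case
  proof (intro exI[of _ "\<Union>w\<in>W. U w"] conjI)
    show "(\<Union>w\<in>W. U w) \<subseteq> V" using U by auto
    show "finite (\<Union>w\<in>W. U w)" using W(2) U by auto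
    have "card (\<Union>w\<in>W. U w) \<le> (\<Sum>w\<in>W. card (U w))" by (rule card_UN_le[OF W(2)])
    also have "\<dots> \<le> (\<Sum>w\<in>W. lam)" using U by (intro sum_mono) auto
    also have "\<dots> = card W * lam" by simp
    also have "\<dots> \<le> lam^k * lam" using W(3) by simp
    finally show "card (\<Union>w\<in>W. U w) \<le> lam ^ Suc k" by (simp add: mult.commute)
    show "oball V d v r \<subseteq> (\<Union>u\<in>(\<Union>w\<in>W. U w). oball V d u (r/2^Suc k))"
    proof
      fix x assume "x \<in> oball V d v r"
      then obtain w where w: "w \<in> W" "x \<in> oball V d w (r/2^k)" using W(4) by blast
      show "x \<in> (\<Union>u\<in>(\<Union>w\<in>W. U w). oball V d u (r/2^Suc k))"
      proof -
        have "x \<in> oball V d w (2*(r/2^Suc k))" using w(2) e by simp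
        then obtain u where "u \<in> U w" "x \<in> oball V d u (r/2^Suc k)" using U w(1) by blast
        then show ?thesis using w(1) by blast
      qed
    qed
  qed
qed

definition invar :: "'a set \<Rightarrow> ('a \<Rightarrow> 'a \<Rightarrow> real) \<Rightarrow> real \<Rightarrow> ('a \<times> 'a set) set \<Rightarrow> bool" where
  "invar V d s X \<longleftrightarrow> (\<forall>p\<in>X. fst p \<in> snd p \<and> snd p \<subseteq> V) \<and>
     (\<forall>p\<in>X. \<forall>q\<in>X. p \<noteq> q \<longrightarrow> snd p \<inter> snd q = {}) \<and>
     (\<forall>p\<in>X. \<forall>q\<in>X. fst p \<noteq> fst q \<longrightarrow> s \<le> d (fst p) (fst q))"

lemma invar_step:
  assumes inv: "invar V d s X"
    and gp: "greedy_part d eta r (fst ` X) gp"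
    and Y: "Y = {(v, \<Union>{S. \<exists>l. (l, S) \<in> X \<and> l \<in> P}) | v P. (v, P) \<in> set gp}"
    and met: "finite_metric V d" and r: "r > 0"
  shows "invar V d (r / 2^(eta+1)) Y"
proof -
  define U where "U P = \<Union>{S. \<exists>l. (l, S) \<in> X \<and> l \<in> P}" for P
  have FV: "fst ` X \<subseteq> V" using inv unfolding invar_def by auto
  have mV: "\<forall>x\<in>V. \<forall>y\<in>V. (d x y = 0 \<longleftrightarrow> x = y) \<and> d x y = d y x"
    using met unfolding finite_metric_def by blast
  have dz: "\<forall>x\<in>fst ` X. d x x = 0" using FV mV by blast
  have sym: "\<And>x y. x \<in> V \<Longrightarrow> y \<in> V \<Longrightarrow> d x y = d y x" using mV by blast
  have inv1: "\<And>p. p\<in>X \<Longrightarrow> fst p \<in> snd p \<and> snd p \<subseteq> V" using inv unfolding invar_def by blast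
  have inv2: "\<And>p q. p\<in>X \<Longrightarrow> q\<in>X \<Longrightarrow> p \<noteq> q \<Longrightarrow> snd p \<inter> snd q = {}"
    using inv unfolding invar_def by blast
  have G1: "v \<in> P \<and> P \<subseteq> fst ` X" if "(v,P) \<in> set gp" for v P using g1[OF gp that dz r] by blast
  have G2: "P \<inter> P' = {} \<and> (r / 2^(eta+1) \<le> d v v' \<or> r / 2^(eta+1) \<le> d v' v)"
    if "(v,P) \<in> set gp" "(v',P') \<in> set gp" "(v,P) \<noteq> (v',P')" for v P v' P'
    using g2[OF gp that dz r] .
  have memY: "\<exists>v P. p = (v, U P) \<and> (v,P) \<in> set gp" if "p \<in> Y" for p
    using that unfolding Y U_def by blast
  have A: "fst p \<in> snd p \<and> snd p \<subseteq> V" if hp: "p \<in> Y" for p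
  proof -
    obtain v P where p: "p = (v, U P)" "(v,P) \<in> set gp" using memY[OF hp] by blast
    have "v \<in> fst ` X" using G1[OF p(2)] by blast
    then obtain S where S: "(v,S) \<in> X" by force
    then have "v \<in> S" using inv1[OF S] by simp
    then have "v \<in> U P" unfolding U_def using S G1[OF p(2)] by blast
    moreover have "U P \<subseteq> V" unfolding U_def using inv1 by fastforce
    ultimately show ?thesis using p by simp
  qed
  have B: "snd p \<inter> snd q = {}" if hpq: "p \<in> Y" "q \<in> Y" "p \<noteq> q" for p q
  proof -
    obtain v P where p: "p = (v, U P)" "(v,P) \<in> set gp" using memY[OF hpq(1)] by blast
    obtain v' P' where q: "q = (v', U P')" "(v',P') \<in> set gp" using memY[OF hpq(2)] by blast
    have "(v,P) \<noteq> (v',P')" using p q hpq(3) by blast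
    then have dis: "P \<inter> P' = {}" using G2 p(2) q(2) by blast
    show ?thesis
    proof (rule ccontr)
      assume "snd p \<inter> snd q \<noteq> {}"
      then obtain x where "x \<in> U P" "x \<in> U P'" using p q by auto
      then obtain l1 S1 l2 S2 where h: "(l1,S1) \<in> X" "l1 \<in> P" "x \<in> S1" "(l2,S2) \<in> X" "l2 \<in> P'" "x \<in> S2"
        unfolding U_def by blast
      then have "(l1,S1) = (l2,S2)" using inv2[OF h(1) h(4)] by auto
      then show False using h dis by blast
    qed
  qed
  have C: "r / 2^(eta+1) \<le> d (fst p) (fst q)" if hpq: "p \<in> Y" "q \<in> Y" "fst p \<noteq> fst q" for p q
  proof -
    obtain v P where p: "p = (v, U P)" "(v,P) \<in> set gp" using memY[OF hpq(1)] by blast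
    obtain v' P' where q: "q = (v', U P')" "(v',P') \<in> set gp" using memY[OF hpq(2)] by blast
    have "(v,P) \<noteq> (v',P')" using p q hpq(3) by auto
    then have "r / 2^(eta+1) \<le> d v v' \<or> r / 2^(eta+1) \<le> d v' v" using G2 p(2) q(2) by blast
    moreover have "v \<in> V" "v' \<in> V" using G1[OF p(2)] G1[OF q(2)] FV by blast+
    ultimately show ?thesis using p q sym by auto
  qed
  show ?thesis unfolding invar_def using A B C by blast
qed

lemma packing:
  assumes met: "finite_metric V d" and dbl: "doubling V d lam" and c: "c \<in> V" and rho: "\<rho> > 0"
    and PV: "P \<subseteq> V" and Pc: "\<forall>u\<in>P. d u c < \<rho>"
    and sep: "\<forall>u\<in>P. \<forall>u'\<in>P. u \<noteq> u' \<longrightarrow> \<sigma> \<le> d u u'"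
    and rs: "\<rho> / 2^k \<le> \<sigma> / 2"
  shows "card P \<le> lam ^ k"
proof -
  obtain W where W: "W \<subseteq> V" "finite W" "card W \<le> lam^k"
    "oball V d c \<rho> \<subseteq> (\<Union>w\<in>W. oball V d w (\<rho>/2^k))"
    using doubling_iter[OF dbl c rho, of k] by blast
  have ex: "\<exists>w. w \<in> W \<and> u \<in> oball V d w (\<rho>/2^k)" if "u \<in> P" for u
  proof -
    have "u \<in> oball V d c \<rho>" using that PV Pc unfolding oball_def by auto
    then show ?thesis using W(4) by blast
  qed
  define f where "f u = (SOME w. w \<in> W \<and> u \<in> oball V d w (\<rho>/2^k))" for u
  have fP: "f u \<in> W \<and> u \<in> oball V d (f u) (\<rho>/2^k)" if "u \<in> P" for u
    unfolding f_def using someI_ex[OF ex[OF that]] .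
  have tri: "\<forall>x\<in>V. \<forall>y\<in>V. \<forall>z\<in>V. d x z \<le> d x y + d y z"
    and mV: "\<forall>x\<in>V. \<forall>y\<in>V. (d x y = 0 \<longleftrightarrow> x = y) \<and> d x y = d y x"
    using met unfolding finite_metric_def by blast+
  have inj: "inj_on f P"
  proof (rule inj_onI)
    fix u u' assume u: "u \<in> P" "u' \<in> P" "f u = f u'"
    show "u = u'"
    proof (rule ccontr)
      assume ne: "u \<noteq> u'"
      define w where "w = f u"
      have wV: "w \<in> V" using fP[OF u(1)] W(1) unfolding w_def by blast
      have uV: "u \<in> V" "u' \<in> V" using u PV by blast+
      have "d u w < \<rho>/2^k" using fP[OF u(1)] unfolding w_def oball_def by auto
      then have d1: "d u w < \<sigma>/2" using rs by linarith
      have "d u' w < \<rho>/2^k" using fP[OF u(2)] u(3) unfolding w_def oball_def by auto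
      then have d2: "d u' w < \<sigma>/2" using rs by linarith
      have "d u u' \<le> d u w + d w u'" using tri uV wV by blast
      also have "d w u' = d u' w" using mV uV wV by blast
      finally have "d u u' < \<sigma>" using d1 d2 by linarith
      moreover have "\<sigma> \<le> d u u'" using sep u ne by blast
      ultimately show False by linarith
    qed
  qed
  have "card P \<le> card W"
    by (rule card_inj_on_le[OF inj _ W(2)]) (use fP in blast)
  then show ?thesis using W(3) by linarith
qed

theorem lemma5:
  fixes V :: "'a set" and d :: "'a \<Rightarrow> 'a \<Rightarrow> real" and lam :: nat
    and eta :: nat and tau r0 :: real
    and Ss :: "nat \<Rightarrow> ('a \<times> 'a set) set" and J j :: nat
    and lstar :: 'a and Sstar :: "'a set"
  assumes "finite_metric V d" and "card V \<ge> 2"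
    and "doubling V d lam"
    and "eta \<ge> 2"
    and "1 + 1 / (2 ^ (eta - 1) - 1) \<le> tau" and "tau \<le> 2 ^ eta"
    and "0 < r0" and "\<forall>u\<in>V. \<forall>v\<in>V. u \<noteq> v \<longrightarrow> r0 < d u v"
    and "hier_run V d eta tau r0 Ss J"
    and "1 \<le> j" and "j \<le> J"
    and "(lstar, Sstar) \<in> Ss j"
  shows "card {S. \<exists>l. (l, S) \<in> Ss (j - 1) \<and> S \<subseteq> Sstar} \<le> lam ^ (3 + eta)"
proof -
  note met = assms(1) and dbl = assms(3) and r0 = assms(7) and sepV = assms(8)
  have finV: "finite V" using met unfolding finite_metric_def by blast
  have H0: "Ss 0 = {(v, {v}) | v. v \<in> V}" using assms(9) unfolding hier_run_def by blast
  have HS: "\<And>m. m < J \<Longrightarrow> \<exists>gp. greedy_part d eta (2 * (tau ^ (Suc m) * r0)) (fst ` Ss m) gp \<and>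
           Ss (Suc m) = {(v, \<Union>{S. \<exists>l. (l, S) \<in> Ss m \<and> l \<in> P}) | v P. (v, P) \<in> set gp}"
  proof -
    fix m assume "m < J"
    moreover have "\<forall>j<J. card (Ss j) > 1 \<and>
        (\<exists>gp. greedy_part d eta (2 * (tau ^ (Suc j) * r0)) (fst ` Ss j) gp \<and>
           Ss (Suc j) = {(v, \<Union>{S. \<exists>l. (l, S) \<in> Ss j \<and> l \<in> P}) | v P. (v, P) \<in> set gp})"
      using assms(9) unfolding hier_run_def by (elim conjE)
    ultimately show "?thesis m" by blast
  qed
  have e2: "(2::real)^(eta-1) \<ge> 2^1" by (rule power_increasing) (use assms(4) in auto)
  then have "1 / ((2::real)^(eta-1) - 1) > 0" by simp
  then have tau1: "tau \<ge> 1" using assms(5) by linarith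
  have tpos: "\<And>m. tau ^ m * r0 > 0" using tau1 r0 by simp
  have invs: "m \<le> J \<Longrightarrow> invar V d (tau^m*r0/2^eta) (Ss m)" for m
  proof (induction m)
    case 0
    have "r0 / 2^eta \<le> r0" using r0 by (simp add: divide_le_eq)
    have a: "\<forall>p\<in>Ss 0. fst p \<in> snd p \<and> snd p \<subseteq> V" unfolding H0 by auto
    have b: "\<forall>p\<in>Ss 0. \<forall>q\<in>Ss 0. p \<noteq> q \<longrightarrow> snd p \<inter> snd q = {}" unfolding H0 by auto
    have c: "\<forall>p\<in>Ss 0. \<forall>q\<in>Ss 0. fst p \<noteq> fst q \<longrightarrow> tau^0*r0/2^eta \<le> d (fst p) (fst q)"
    proof (intro ballI impI)
      fix p q assume "p \<in> Ss 0" "q \<in> Ss 0" "fst p \<noteq> fst q"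
      moreover then have "fst p \<in> V" "fst q \<in> V" unfolding H0 by auto
      ultimately have "r0 < d (fst p) (fst q)" using sepV by blast
      then show "tau^0*r0/2^eta \<le> d (fst p) (fst q)" using \<open>r0 / 2^eta \<le> r0\<close> by simp
    qed
    show ?case unfolding invar_def using a b c by blast
  next
    case (Suc m)
    then have mJ: "m < J" by simp
    obtain gp where gp: "greedy_part d eta (2 * (tau ^ (Suc m) * r0)) (fst ` Ss m) gp"
      "Ss (Suc m) = {(v, \<Union>{S. \<exists>l. (l, S) \<in> Ss m \<and> l \<in> P}) | v P. (v, P) \<in> set gp}"
      using HS[OF mJ] by blast
    have "invar V d (2 * (tau ^ (Suc m) * r0) / 2^(eta+1)) (Ss (Suc m))"
      by (rule invar_step[OF Suc.IH[OF less_imp_le[OF mJ]] gp(1) gp(2) met]) (use tpos[of "Suc m"] in linarith)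
    moreover have "2 * (tau ^ (Suc m) * r0) / 2^(eta+1) = tau^Suc m*r0/2^eta" by simp
    ultimately show ?case by simp
  qed
  obtain m where jm: "j = Suc m" using assms(10) by (cases j) auto
  have mJ: "m < J" using jm assms(11) by simp
  define \<sigma> where "\<sigma> = tau^m*r0/2^eta"
  have inv: "invar V d \<sigma> (Ss m)" unfolding \<sigma>_def using invs mJ by simp
  have inv1: "\<And>p. p\<in>Ss m \<Longrightarrow> fst p \<in> snd p \<and> snd p \<subseteq> V" using inv unfolding invar_def by blast
  have inv2: "\<And>p q. p\<in>Ss m \<Longrightarrow> q\<in>Ss m \<Longrightarrow> p \<noteq> q \<Longrightarrow> snd p \<inter> snd q = {}"
    using inv unfolding invar_def by blast
  have inv3: "\<And>p q. p\<in>Ss m \<Longrightarrow> q\<in>Ss m \<Longrightarrow> fst p \<noteq> fst q \<Longrightarrow> \<sigma> \<le> d (fst p) (fst q)"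
    using inv unfolding invar_def by blast
  obtain gp where gp: "greedy_part d eta (2 * (tau ^ (Suc m) * r0)) (fst ` Ss m) gp"
      "Ss (Suc m) = {(v, \<Union>{S. \<exists>l. (l, S) \<in> Ss m \<and> l \<in> P}) | v P. (v, P) \<in> set gp}"
      using HS[OF mJ] by blast
  obtain P where P: "Sstar = \<Union>{S. \<exists>l. (l, S) \<in> Ss m \<and> l \<in> P}" "(lstar, P) \<in> set gp"
  proof -
    have "(lstar,Sstar) \<in> Ss (Suc m)" using assms(12) jm by simp
    then have "(lstar,Sstar) \<in> {(v, \<Union>{S. \<exists>l. (l, S) \<in> Ss m \<and> l \<in> P}) | v P. (v, P) \<in> set gp}"
      using gp(2) by simp
    then show ?thesis using that by blast
  qed
  have FV: "fst ` Ss m \<subseteq> V" using inv1 by blast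
  have mV: "\<forall>x\<in>V. \<forall>y\<in>V. (d x y = 0 \<longleftrightarrow> x = y) \<and> d x y = d y x"
    using met unfolding finite_metric_def by blast
  have dz: "\<forall>x\<in>fst ` Ss m. d x x = 0" using FV mV by blast
  have G1: "lstar \<in> P \<and> P \<subseteq> fst ` Ss m \<and> (\<forall>u\<in>P. d u lstar < 2 * (tau ^ (Suc m) * r0) / 2^(eta+1))"
    using g1[OF gp(1) P(2) dz] tpos[of "Suc m"] by linarith
  define B where "B = {p \<in> Ss m. fst p \<in> P}"
  have finS: "finite (Ss m)"
  proof (rule finite_subset)
    show "Ss m \<subseteq> V \<times> Pow V" using inv1 by force
    show "finite (V \<times> Pow V)" using finV by simp
  qed
  have CB: "{S. \<exists>l. (l, S) \<in> Ss (j - 1) \<and> S \<subseteq> Sstar} \<subseteq> snd ` B"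
  proof
    fix S assume "S \<in> {S. \<exists>l. (l, S) \<in> Ss (j - 1) \<and> S \<subseteq> Sstar}"
    then obtain l where l: "(l,S) \<in> Ss m" "S \<subseteq> Sstar" using jm by auto
    have "l \<in> S" using inv1[OF l(1)] by simp
    then have "l \<in> Sstar" using l(2) by blast
    then obtain l' S' where h: "(l',S') \<in> Ss m" "l' \<in> P" "l \<in> S'" using P(1) by blast
    have "(l,S) = (l',S')"
    proof (rule ccontr)
      assume "(l,S) \<noteq> (l',S')"
      then have "S \<inter> S' = {}" using inv2[OF l(1) h(1)] by simp
      then show False using \<open>l \<in> S\<close> h(3) by blast
    qed
    then have "(l,S) \<in> B" unfolding B_def using l(1) h(2) by simp
    then show "S \<in> snd ` B" by force
  qed
  have finB: "finite B" unfolding B_def using finS by simp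
  have injB: "inj_on fst B"
  proof (rule inj_onI)
    fix p q assume pq: "p \<in> B" "q \<in> B" "fst p = fst q"
    show "p = q"
    proof (rule ccontr)
      assume ne: "p \<noteq> q"
      have pS: "p \<in> Ss m" "q \<in> Ss m" using pq(1,2) unfolding B_def by simp_all
      have dj: "snd p \<inter> snd q = {}" using inv2[OF pS ne] .
      have a1: "fst p \<in> snd p" using inv1[OF pS(1)] by simp
      have a2: "fst p \<in> snd q" using inv1[OF pS(2)] pq(3) by simp
      show False using dj a1 a2 by (simp add: disjoint_iff)
    qed
  qed
  have PsV: "P \<subseteq> V" using G1 FV by blast
  have finP: "finite P" using finite_subset[OF PsV finV] .
  have "card {S. \<exists>l. (l, S) \<in> Ss (j - 1) \<and> S \<subseteq> Sstar} \<le> card (snd ` B)"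
    by (rule card_mono[OF _ CB]) (use finB in simp)
  also have "\<dots> \<le> card B" using finB by (rule card_image_le)
  also have "\<dots> \<le> card P"
    by (rule card_inj_on_le[OF injB _ finP]) (auto simp: B_def)
  also have "\<dots> \<le> lam ^ (eta+1)"
  proof (rule packing[OF met dbl])
    show "lstar \<in> V" using G1 FV by blast
    show "tau * \<sigma> > 0" unfolding \<sigma>_def using tpos[of m] tau1 by simp
    show "P \<subseteq> V" using G1 FV by blast
    have "2 * (tau ^ (Suc m) * r0) / 2^(eta+1) = tau * \<sigma>" unfolding \<sigma>_def by simp
    then show "\<forall>u\<in>P. d u lstar < tau * \<sigma>" using G1 by simp
    show "\<forall>u\<in>P. \<forall>u'\<in>P. u \<noteq> u' \<longrightarrow> \<sigma> \<le> d u u'"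
    proof (intro ballI impI)
      fix u u' assume u: "u \<in> P" "u' \<in> P" "u \<noteq> u'"
      obtain p where p: "p \<in> Ss m" "fst p = u" using u(1) G1 by force
      obtain q where q: "q \<in> Ss m" "fst q = u'" using u(2) G1 by force
      show "\<sigma> \<le> d u u'" using inv3[OF p(1) q(1)] p q u(3) by simp
    qed
    have sp: "\<sigma> \<ge> 0" unfolding \<sigma>_def using tpos[of m] by simp
    have "tau * \<sigma> \<le> 2^eta * \<sigma>" using assms(6) sp by (rule mult_right_mono)
    then have "tau * \<sigma> / 2^(eta+1) \<le> 2^eta * \<sigma> / 2^(eta+1)" by (rule divide_right_mono) simp
    also have "2^eta * \<sigma> / 2^(eta+1) = \<sigma> / 2" by simp
    finally show "tau * \<sigma> / 2^(eta+1) \<le> \<sigma> / 2" .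
  qed
  also have "\<dots> \<le> lam ^ (3 + eta)"
  proof (cases "lam = 0")
    case True then show ?thesis by simp
  next
    case False then show ?thesis by (intro power_increasing) auto
  qed
  finally show ?thesis .
qed

end
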